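(* Let $\nu\in\mathbb{R}$, let $J\subset(-\nu,\infty)$ be an open interval, and let $f:J\to\mathbb{R}$ be smooth. Let $q(u_1,u_2,u_3)$ be a smooth solution on $J^3$ of the system $$2(u_i-u_j)\frac{\partial^2 q}{\partial u_i\partial u_j}=\frac{\partial q}{\partial u_i}-\frac{\partial q}{\partial u_j}\quad(i,j=1,2,3),\qquad q(u,u,u)=f(u).$$ Put $\gamma=u_1+u_2+u_3+2\nu$ and define $$w_i=\big(\lambda_i(u_1,u_2,u_3)-\gamma\big)\frac{\partial q}{\partial u_i}+q,\qquad i=1,2,3.$$ Then on $\{u_3<u_2<u_1\}\cap J^3$ the functions $w_i$ satisfy $$\frac{\partial w_i}{\partial u_j}=B_{ij}(w_i-w_j),\qquad B_{ij}=\frac12\,\frac{(\lambda_i-\gamma)-2(u_i-u_j)}{(\lambda_j-\gamma)(u_i-u_j)},\quad i\neq j.$$ With the $\lambda_i$ (and hence the $w_i$) extended continuously to the boundary, the $w_i$ also satisfy the boundary conditions $$w_1(u_1,u_1,u_3)=w_2(u_1,u_1,u_3),\qquad w_3(u_1,u_1,u_3)=f(u_3),$$ $$w_1(u_1,u_3,u_3)=f(u_1),\qquad w_2(u_1,u_3,u_3)=w_3(u_1,u_3,u_3).$$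
   Context: For $-\nu<u_3<u_2<u_1$ define $$I(u_1,u_2,u_3)=\int_{u_3}^{u_2}\frac{\eta+\nu}{\sqrt{(\eta+\nu)(u_1-\eta)(u_2-\eta)(\eta-u_3)}}\,d\eta,$$ and for $i=1,2,3$ $$\lambda_i=u_1+u_2+u_3+2\nu-\frac{I}{\partial I/\partial u_i}.$$ These functions extend continuously to the boundary of their domain: - on $u_2=u_3<u_1$: $\lambda_1=3u_1+2\nu$ and $\lambda_2=\lambda_3=u_1+2u_3+2\nu-4(u_3+\nu)(u_1-u_3)/(u_1+\nu)$; - on $u_1=u_2>u_3$: $\lambda_1=\lambda_2=2u_1+u_3+2\nu$ and $\lambda_3=3u_3+2\nu$. The boundary value problem for $q$ is known to have a unique solution, which is symmetric in $u_1,u_2,u_3$. It is given explicitly by $$q(u_1,u_2,u_3)=\frac{1}{2\sqrt2\,\pi}\int_{-1}^1\int_{-1}^1\frac{f\big(\tfrac{1+\mu}{2}\tfrac{1+\tau}{2}u_1+\tfrac{1+\mu}{2}\tfrac{1-\tau}{2}u_2+\tfrac{1-\mu}{2}u_3\big)}{\sqrt{(1-\mu)(1-\tau^2)}}\,d\mu\,d\tau.$$ *)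

theory Defs
  imports "HOL-Analysis.Analysis"
begin

definition pd :: "3 \<Rightarrow> (real^3 \<Rightarrow> real) \<Rightarrow> real^3 \<Rightarrow> real" where
  "pd i g x = deriv (\<lambda>t. g (x + t *\<^sub>R axis i 1)) 0"

definition iter_pd :: "3 list \<Rightarrow> (real^3 \<Rightarrow> real) \<Rightarrow> real^3 \<Rightarrow> real" where
  "iter_pd is g = foldr pd is g"

definition smooth3_on :: "(real^3) set \<Rightarrow> (real^3 \<Rightarrow> real) \<Rightarrow> bool" where
  "smooth3_on S g \<longleftrightarrow>
     (\<forall>is. continuous_on S (iter_pd is g) \<and>
        (\<forall>i. \<forall>x\<in>S. ((\<lambda>t. iter_pd is g (x + t *\<^sub>R axis i 1))
                         has_real_derivative iter_pd (i # is) g x) (at 0)))"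

definition smooth_on_real :: "real set \<Rightarrow> (real \<Rightarrow> real) \<Rightarrow> bool" where
  "smooth_on_real S f \<longleftrightarrow>
     (\<forall>n. \<forall>x\<in>S. ((deriv ^^ n) f has_real_derivative (deriv ^^ Suc n) f x) (at x))"

definition cube :: "real set \<Rightarrow> (real^3) set" where
  "cube J = {u. \<forall>i. u $ i \<in> J}"

definition Iint :: "real \<Rightarrow> real^3 \<Rightarrow> real" where
  "Iint \<nu> u = integral {u$3..u$2}
     (\<lambda>\<eta>. (\<eta> + \<nu>) / sqrt ((\<eta> + \<nu>) * (u$1 - \<eta>) * (u$2 - \<eta>) * (\<eta> - u$3)))"

definition gam :: "real \<Rightarrow> real^3 \<Rightarrow> real" where
  "gam \<nu> u = u$1 + u$2 + u$3 + 2 * \<nu>"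

text \<open>lambda_i on the open domain -nu < u3 < u2 < u1.\<close>
definition lam :: "real \<Rightarrow> 3 \<Rightarrow> real^3 \<Rightarrow> real" where
  "lam \<nu> i u = gam \<nu> u - Iint \<nu> u / pd i (Iint \<nu>) u"

definition lam_ext :: "real \<Rightarrow> 3 \<Rightarrow> real^3 \<Rightarrow> real" where
  "lam_ext \<nu> i u =
    (if u$3 < u$2 \<and> u$2 < u$1 then lam \<nu> i u
     else if u$2 = u$3 \<and> u$3 < u$1 then
       (if i = 1 then 3 * u$1 + 2 * \<nu>
        else u$1 + 2 * u$3 + 2 * \<nu> - 4 * (u$3 + \<nu>) * (u$1 - u$3) / (u$1 + \<nu>))
     else if u$1 = u$2 \<and> u$3 < u$1 then
       (if i = 3 then 3 * u$3 + 2 * \<nu> else 2 * u$1 + u$3 + 2 * \<nu>)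
     else undefined)"

definition wfun :: "real \<Rightarrow> (real^3 \<Rightarrow> real) \<Rightarrow> 3 \<Rightarrow> real^3 \<Rightarrow> real" where
  "wfun \<nu> q i u = (lam_ext \<nu> i u - gam \<nu> u) * pd i q u + q u"

definition Bcoef :: "real \<Rightarrow> 3 \<Rightarrow> 3 \<Rightarrow> real^3 \<Rightarrow> real" where
  "Bcoef \<nu> i j u = (1/2) * ((lam \<nu> i u - gam \<nu> u) - 2 * (u$i - u$j))
                          / ((lam \<nu> j u - gam \<nu> u) * (u$i - u$j))"

end

theory Submission
  imports Defs
begin

definition w0 :: "real \<Rightarrow> real \<Rightarrow> real \<Rightarrow> real" where
  "w0 \<nu> a x = 2 * sqrt (x + \<nu>) / sqrt (a - x)"
definition w1 :: "real \<Rightarrow> real \<Rightarrow> real \<Rightarrow> real" where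
  "w1 \<nu> a x = - sqrt (x + \<nu>) / sqrt (a - x) ^ 3"
definition wp :: "real \<Rightarrow> real \<Rightarrow> real \<Rightarrow> real" where
  "wp \<nu> a x = 1 / (sqrt (x + \<nu>) * sqrt (a - x)) + sqrt (x + \<nu>) / sqrt (a - x) ^ 3"
definition w1p :: "real \<Rightarrow> real \<Rightarrow> real \<Rightarrow> real" where
  "w1p \<nu> a x = - 1 / (2 * sqrt (x + \<nu>) * sqrt (a - x) ^ 3) - 3 * sqrt (x + \<nu>) / (2 * sqrt (a - x) ^ 5)"
definition wpp :: "real \<Rightarrow> real \<Rightarrow> real \<Rightarrow> real" where
  "wpp \<nu> a x = - 1 / (2 * sqrt (x + \<nu>) ^ 3 * sqrt (a - x)) + 1 / (sqrt (x + \<nu>) * sqrt (a - x) ^ 3)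
     + 3 * sqrt (x + \<nu>) / (2 * sqrt (a - x) ^ 5)"

lemma d_w0_x: "((\<lambda>x. w0 \<nu> a x) has_real_derivative wp \<nu> a x) (at x)" if "x + \<nu> > 0" "a - x > 0" for x a \<nu> :: real
proof -
  define r where "r = sqrt (x + \<nu>)"
  define t where "t = sqrt (a - x)"
  have r: "r > 0" "x + \<nu> = r^2" using that by (auto simp: r_def)
  have t: "t > 0" "a - x = t^2" using that by (auto simp: t_def)
  show ?thesis unfolding w0_def wp_def
    apply (insert that)
    apply (rule derivative_eq_intros refl | simp)+
    unfolding r_def[symmetric] t_def[symmetric]
    using r t by (simp add: field_simps power_def)
qed

lemma d_w0_a: "((\<lambda>a. w0 \<nu> a x) has_real_derivative w1 \<nu> a x) (at a)" if "x + \<nu> > 0" "a - x > 0" for x a \<nu> :: real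
proof -
  define r where "r = sqrt (x + \<nu>)"
  define t where "t = sqrt (a - x)"
  have r: "r > 0" "x + \<nu> = r^2" using that by (auto simp: r_def)
  have t: "t > 0" "a - x = t^2" using that by (auto simp: t_def)
  show ?thesis unfolding w0_def w1_def
    apply (insert that)
    apply (rule derivative_eq_intros refl | simp)+
    unfolding r_def[symmetric] t_def[symmetric]
    using r t by (simp add: field_simps power_def)
qed

lemma d_w1_x: "((\<lambda>x. w1 \<nu> a x) has_real_derivative w1p \<nu> a x) (at x)" if "x + \<nu> > 0" "a - x > 0" for x a \<nu> :: real
proof -
  define r where "r = sqrt (x + \<nu>)"
  define t where "t = sqrt (a - x)"
  have r: "r > 0" "x + \<nu> = r^2" using that by (auto simp: r_def)
  have t: "t > 0" "a - x = t^2" using that by (auto simp: t_def)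
  show ?thesis unfolding w1_def w1p_def
    apply (insert that)
    apply (rule derivative_eq_intros refl | simp)+
    unfolding r_def[symmetric] t_def[symmetric]
    using r t by (simp add: field_simps power_def)
qed

lemma d_wp_x: "((\<lambda>x. wp \<nu> a x) has_real_derivative wpp \<nu> a x) (at x)" if "x + \<nu> > 0" "a - x > 0" for x a \<nu> :: real
proof -
  define r where "r = sqrt (x + \<nu>)"
  define t where "t = sqrt (a - x)"
  have r: "r > 0" "x + \<nu> = r^2" using that by (auto simp: r_def)
  have t: "t > 0" "a - x = t^2" using that by (auto simp: t_def)
  show ?thesis unfolding wp_def wpp_def
    apply (insert that)
    apply (rule derivative_eq_intros refl | simp)+
    unfolding r_def[symmetric] t_def[symmetric]
    using r t by (simp add: field_simps power_def)
qed

lemma d_wp_a: "((\<lambda>a. wp \<nu> a x) has_real_derivative w1p \<nu> a x) (at a)" if "x + \<nu> > 0" "a - x > 0" for x a \<nu> :: real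
proof -
  define r where "r = sqrt (x + \<nu>)"
  define t where "t = sqrt (a - x)"
  have r: "r > 0" "x + \<nu> = r^2" using that by (auto simp: r_def)
  have t: "t > 0" "a - x = t^2" using that by (auto simp: t_def)
  show ?thesis unfolding wp_def w1p_def
    apply (insert that)
    apply (rule derivative_eq_intros refl | simp)+
    unfolding r_def[symmetric] t_def[symmetric]
    using r t by (simp add: field_simps power_def)
qed


definition et :: "real \<Rightarrow> real \<Rightarrow> real \<Rightarrow> real" where
  "et b c \<theta> = c * cos \<theta> ^ 2 + b * sin \<theta> ^ 2"

lemma et_alt: "et b c \<theta> = c + (b - c) * sin \<theta> ^ 2"
  unfolding et_def by (simp add: cos_squared_eq algebra_simps)

lemma et_bounds: assumes "c \<le> b" shows "c \<le> et b c \<theta>" "et b c \<theta> \<le> b"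
proof -
  have s: "0 \<le> sin \<theta> ^ 2" "sin \<theta> ^ 2 \<le> 1" by (auto simp: abs_square_le_1)
  have "(b - c) * sin \<theta> ^ 2 \<le> (b - c)" using s assms mult_left_mono[of "sin \<theta> ^ 2" 1 "b - c"] by simp
  moreover have "0 \<le> (b - c) * sin \<theta> ^ 2" using s assms by (intro mult_nonneg_nonneg) auto
  ultimately show "c \<le> et b c \<theta>" "et b c \<theta> \<le> b" unfolding et_alt by linarith+
qed

lemma d_et_b: "((\<lambda>x. et x c \<theta>) has_real_derivative sin \<theta> ^ 2) (at x)"
  unfolding et_def by (rule derivative_eq_intros refl | simp)+
lemma d_et_c: "((\<lambda>x. et b x \<theta>) has_real_derivative cos \<theta> ^ 2) (at x)"
  unfolding et_def by (rule derivative_eq_intros refl | simp)+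

lemma continuous_on_et[continuous_intros]:
  fixes S :: "'a::t2_space set"
  shows "continuous_on S f \<Longrightarrow> continuous_on S g \<Longrightarrow> continuous_on S h \<Longrightarrow> continuous_on S (\<lambda>p. et (f p) (g p) (h p))"
  unfolding et_def by (intro continuous_intros; assumption)

lemma cont_w:
  assumes "continuous_on S \<alpha>" "continuous_on S e" "\<And>p. p \<in> S \<Longrightarrow> e p + \<nu> > 0 \<and> \<alpha> p - e p > 0"
  shows "continuous_on S (\<lambda>p. w0 \<nu> (\<alpha> p) (e p))" "continuous_on S (\<lambda>p. w1 \<nu> (\<alpha> p) (e p))"
    "continuous_on S (\<lambda>p. wp \<nu> (\<alpha> p) (e p))" "continuous_on S (\<lambda>p. w1p \<nu> (\<alpha> p) (e p))"
    "continuous_on S (\<lambda>p. wpp \<nu> (\<alpha> p) (e p))"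
  unfolding w0_def w1_def wp_def w1p_def wpp_def
  by (intro continuous_intros assms(1,2); force dest: assms(3))+

lemma leib:
  fixes F F' :: "real \<Rightarrow> real \<Rightarrow> real"
  assumes U: "open U" "convex U" "x0 \<in> U"
    and d: "\<And>x t. x \<in> U \<Longrightarrow> t \<in> {0..pi/2} \<Longrightarrow> ((\<lambda>x. F x t) has_real_derivative F' x t) (at x)"
    and cF: "continuous_on (U \<times> {0..pi/2}) (\<lambda>p. F (fst p) (snd p))"
    and cF': "continuous_on (U \<times> {0..pi/2}) (\<lambda>p. F' (fst p) (snd p))"
  shows "((\<lambda>x. integral {0..pi/2} (F x)) has_real_derivative integral {0..pi/2} (F' x0)) (at x0)"
proof -
  have int: "F x integrable_on cbox 0 (pi/2)" if "x \<in> U" for x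
  proof -
    have "continuous_on {0..pi/2} (\<lambda>t. F (fst (x,t)) (snd (x,t)))"
      apply (rule continuous_on_compose2[OF cF])
       apply (rule continuous_on_Pair[OF continuous_on_const continuous_on_id])
      using that by auto
    then show ?thesis by (simp add: integrable_continuous_real)
  qed
  have cF'': "continuous_on (U \<times> cbox 0 (pi/2)) (\<lambda>(x, t). F' x t)"
    using cF' by (simp add: split_beta')
  have d': "((\<lambda>x. F x t) has_field_derivative F' x t) (at x within U)" if "x \<in> U" "t \<in> cbox 0 (pi/2)" for x t
    using d[of x t] that by (simp add: has_field_derivative_at_within)
  have "((\<lambda>x. integral (cbox 0 (pi/2)) (F x)) has_real_derivative integral (cbox 0 (pi/2)) (F' x0)) (at x0 within U)"
    by (rule leibniz_rule_field_derivative[OF d' int cF'' U(3,2)])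
  then show ?thesis by (simp only: at_within_open[OF U(3,1)] cbox_interval)
qed


definition "Ir \<nu> a b c = integral {0..pi/2} (\<lambda>\<theta>. w0 \<nu> a (et b c \<theta>))"
definition "I1r \<nu> a b c = integral {0..pi/2} (\<lambda>\<theta>. w1 \<nu> a (et b c \<theta>))"
definition "I2r \<nu> a b c = integral {0..pi/2} (\<lambda>\<theta>. sin \<theta> ^ 2 * wp \<nu> a (et b c \<theta>))"
definition "I3r \<nu> a b c = integral {0..pi/2} (\<lambda>\<theta>. cos \<theta> ^ 2 * wp \<nu> a (et b c \<theta>))"
definition "I12r \<nu> a b c = integral {0..pi/2} (\<lambda>\<theta>. sin \<theta> ^ 2 * w1p \<nu> a (et b c \<theta>))"
definition "I13r \<nu> a b c = integral {0..pi/2} (\<lambda>\<theta>. cos \<theta> ^ 2 * w1p \<nu> a (et b c \<theta>))"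
definition "I23r \<nu> a b c = integral {0..pi/2} (\<lambda>\<theta>. sin \<theta> ^ 2 * (cos \<theta> ^ 2 * wpp \<nu> a (et b c \<theta>)))"

lemma pos_gen: "-\<nu> < c \<Longrightarrow> c \<le> b \<Longrightarrow> b < a \<Longrightarrow> et b c \<theta> + \<nu> > 0 \<and> a - et b c \<theta> > 0"
  using et_bounds[of c b \<theta>] by auto

lemma pos_a: "x \<in> {b<..} \<Longrightarrow> -\<nu> < c \<Longrightarrow> c < b \<Longrightarrow> et b c \<theta> + \<nu> > 0 \<and> x - et b c \<theta> > 0"
  using pos_gen[of \<nu> c b x \<theta>] by auto
lemma pos_b: "x \<in> {c<..<a} \<Longrightarrow> -\<nu> < c \<Longrightarrow> et x c \<theta> + \<nu> > 0 \<and> a - et x c \<theta> > 0"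
  using pos_gen[of \<nu> c x a \<theta>] by auto
lemma pos_c: "x \<in> {-\<nu><..<b} \<Longrightarrow> b < a \<Longrightarrow> et b x \<theta> + \<nu> > 0 \<and> a - et b x \<theta> > 0"
  using pos_gen[of \<nu> x b a \<theta>] by auto

lemma contU_a:
  assumes "-\<nu> < c" "c < b"
  shows "continuous_on ({b<..} \<times> {0..pi/2}) (\<lambda>p. w0 \<nu> (fst p) (et b c (snd p)))"
    "continuous_on ({b<..} \<times> {0..pi/2}) (\<lambda>p. w1 \<nu> (fst p) (et b c (snd p)))"
    "continuous_on ({b<..} \<times> {0..pi/2}) (\<lambda>p. wp \<nu> (fst p) (et b c (snd p)))"
    "continuous_on ({b<..} \<times> {0..pi/2}) (\<lambda>p. w1p \<nu> (fst p) (et b c (snd p)))"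
    "continuous_on ({b<..} \<times> {0..pi/2}) (\<lambda>p. wpp \<nu> (fst p) (et b c (snd p)))"
  by (rule cont_w; (intro continuous_intros)?; use pos_a assms in force)+

lemma contU_b:
  assumes "-\<nu> < c"
  shows "continuous_on ({c<..<a} \<times> {0..pi/2}) (\<lambda>p. w0 \<nu> a (et (fst p) c (snd p)))"
    "continuous_on ({c<..<a} \<times> {0..pi/2}) (\<lambda>p. w1 \<nu> a (et (fst p) c (snd p)))"
    "continuous_on ({c<..<a} \<times> {0..pi/2}) (\<lambda>p. wp \<nu> a (et (fst p) c (snd p)))"
    "continuous_on ({c<..<a} \<times> {0..pi/2}) (\<lambda>p. w1p \<nu> a (et (fst p) c (snd p)))"
    "continuous_on ({c<..<a} \<times> {0..pi/2}) (\<lambda>p. wpp \<nu> a (et (fst p) c (snd p)))"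
  by (rule cont_w; (intro continuous_intros)?; use pos_b assms in force)+

lemma contU_c:
  assumes "b < a"
  shows "continuous_on ({-\<nu><..<b} \<times> {0..pi/2}) (\<lambda>p. w0 \<nu> a (et b (fst p) (snd p)))"
    "continuous_on ({-\<nu><..<b} \<times> {0..pi/2}) (\<lambda>p. w1 \<nu> a (et b (fst p) (snd p)))"
    "continuous_on ({-\<nu><..<b} \<times> {0..pi/2}) (\<lambda>p. wp \<nu> a (et b (fst p) (snd p)))"
    "continuous_on ({-\<nu><..<b} \<times> {0..pi/2}) (\<lambda>p. w1p \<nu> a (et b (fst p) (snd p)))"
    "continuous_on ({-\<nu><..<b} \<times> {0..pi/2}) (\<lambda>p. wpp \<nu> a (et b (fst p) (snd p)))"
  by (rule cont_w; (intro continuous_intros)?; use pos_c assms in force)+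


context
  fixes \<nu> a b c :: real
  assumes R: "-\<nu> < c" "c < b" "b < a"
begin

lemma dIr_a: "((\<lambda>x. Ir \<nu> x b c) has_real_derivative I1r \<nu> a b c) (at a)"
  unfolding Ir_def I1r_def
  apply (rule leib[where U="{b<..}"])
  using R apply auto[3]
  subgoal for x t using pos_a[of x b \<nu> c t] R by (auto intro!: d_w0_a)
  using contU_a[OF R(1,2)] by auto

lemma dI2r_a: "((\<lambda>x. I2r \<nu> x b c) has_real_derivative I12r \<nu> a b c) (at a)"
  unfolding I2r_def I12r_def
  apply (rule leib[where U="{b<..}"])
  using R apply auto[3]
  subgoal for x t using pos_a[of x b \<nu> c t] R by (auto intro!: DERIV_cmult d_wp_a)
  using contU_a[OF R(1,2)] by (auto intro!: continuous_intros)

lemma dI3r_a: "((\<lambda>x. I3r \<nu> x b c) has_real_derivative I13r \<nu> a b c) (at a)"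
  unfolding I3r_def I13r_def
  apply (rule leib[where U="{b<..}"])
  using R apply auto[3]
  subgoal for x t using pos_a[of x b \<nu> c t] R by (auto intro!: DERIV_cmult d_wp_a)
  using contU_a[OF R(1,2)] by (auto intro!: continuous_intros)

lemma dIr_b: "((\<lambda>x. Ir \<nu> a x c) has_real_derivative I2r \<nu> a b c) (at b)"
  unfolding Ir_def I2r_def
  apply (rule leib[where U="{c<..<a}"])
  using R apply auto[3]
  subgoal for x t
    apply (rule DERIV_cong[OF DERIV_chain2[OF d_w0_x d_et_b]])
    using pos_b[of x c a \<nu> t] R by auto
  using contU_b[OF R(1)] by (auto intro!: continuous_intros)

lemma dI1r_b: "((\<lambda>x. I1r \<nu> a x c) has_real_derivative I12r \<nu> a b c) (at b)"
  unfolding I1r_def I12r_def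
  apply (rule leib[where U="{c<..<a}"])
  using R apply auto[3]
  subgoal for x t
    apply (rule DERIV_cong[OF DERIV_chain2[OF d_w1_x d_et_b]])
    using pos_b[of x c a \<nu> t] R by auto
  using contU_b[OF R(1)] by (auto intro!: continuous_intros)

lemma dI3r_b: "((\<lambda>x. I3r \<nu> a x c) has_real_derivative I23r \<nu> a b c) (at b)"
  unfolding I3r_def I23r_def
  apply (rule leib[where U="{c<..<a}"])
  using R apply auto[3]
  subgoal for x t
    apply (rule DERIV_cong[OF DERIV_cmult[OF DERIV_chain2[OF d_wp_x d_et_b]]])
    using pos_b[of x c a \<nu> t] R by auto
  using contU_b[OF R(1)] by (auto intro!: continuous_intros)

lemma dIr_c: "((\<lambda>x. Ir \<nu> a b x) has_real_derivative I3r \<nu> a b c) (at c)"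
  unfolding Ir_def I3r_def
  apply (rule leib[where U="{-\<nu><..<b}"])
  using R apply auto[3]
  subgoal for x t
    apply (rule DERIV_cong[OF DERIV_chain2[OF d_w0_x d_et_c]])
    using pos_c[of x \<nu> b a t] R by auto
  using contU_c[OF R(3)] by (auto intro!: continuous_intros)

lemma dI1r_c: "((\<lambda>x. I1r \<nu> a b x) has_real_derivative I13r \<nu> a b c) (at c)"
  unfolding I1r_def I13r_def
  apply (rule leib[where U="{-\<nu><..<b}"])
  using R apply auto[3]
  subgoal for x t
    apply (rule DERIV_cong[OF DERIV_chain2[OF d_w1_x d_et_c]])
    using pos_c[of x \<nu> b a t] R by auto
  using contU_c[OF R(3)] by (auto intro!: continuous_intros)

lemma dI2r_c: "((\<lambda>x. I2r \<nu> a b x) has_real_derivative I23r \<nu> a b c) (at c)"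
  unfolding I2r_def I23r_def
  apply (rule leib[where U="{-\<nu><..<b}"])
  using R apply auto[3]
  subgoal for x t
    apply (rule DERIV_cong[OF DERIV_cmult[OF DERIV_chain2[OF d_wp_x d_et_c]]])
    using pos_c[of x \<nu> b a t] R by auto
  using contU_c[OF R(3)] by (auto intro!: continuous_intros)

end

lemma d_et_theta: "((\<lambda>\<theta>. et b c \<theta>) has_real_derivative 2 * (b - c) * sin \<theta> * cos \<theta>) (at \<theta>)"
  unfolding et_def by (rule derivative_eq_intros refl | simp)+ (simp add: algebra_simps)

lemma key_w: "x + \<nu> > 0 \<Longrightarrow> a - x > 0 \<Longrightarrow> 2*(a-x)*w1p \<nu> a x - 2*w1 \<nu> a x + wp \<nu> a x = 0"
proof -
  assume h: "x + \<nu> > 0" "a - x > 0"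
  define r where "r = sqrt (x + \<nu>)"
  define t where "t = sqrt (a - x)"
  have r: "r > 0" using h by (auto simp: r_def)
  have t: "t > 0" "a - x = t^2" using h by (auto simp: t_def)
  show ?thesis unfolding w1p_def w1_def wp_def r_def[symmetric] t_def[symmetric] t(2)
    using r t by (simp add: field_simps power_def)
qed

lemma ftc0:
  assumes "\<And>\<theta>. (T has_real_derivative E \<theta>) (at \<theta>)" "T 0 = 0" "T (pi/2) = 0"
  shows "(E has_integral 0) {0..pi/2}"
proof -
  have "(E has_integral (T (pi/2) - T 0)) {0..pi/2}"
    by (rule fundamental_theorem_of_calculus)
       (auto simp: has_real_derivative_iff_has_vector_derivative[symmetric] intro: has_field_derivative_at_within assms(1))
  then show ?thesis using assms by simp
qed

context
  fixes \<nu> a b c :: real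
  assumes R: "-\<nu> < c" "c < b" "b < a"
begin

lemma posR: "et b c \<theta> + \<nu> > 0" "a - et b c \<theta> > 0"
  using pos_gen[of \<nu> c b a \<theta>] R by auto

lemma contR:
  shows "continuous_on {0..pi/2} (\<lambda>p. w0 \<nu> a (et b c p))"
    "continuous_on {0..pi/2} (\<lambda>p. w1 \<nu> a (et b c p))"
    "continuous_on {0..pi/2} (\<lambda>p. wp \<nu> a (et b c p))"
    "continuous_on {0..pi/2} (\<lambda>p. w1p \<nu> a (et b c p))"
    "continuous_on {0..pi/2} (\<lambda>p. wpp \<nu> a (et b c p))"
  by (rule cont_w; (intro continuous_intros)?; use posR in force)+

lemma hint: "(f has_integral integral {0..pi/2} f) {0..pi/2}" if "continuous_on {0..pi/2} f" for f :: "real \<Rightarrow> real"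
  using integrable_continuous_real[OF that] by (rule integrable_integral)

lemma epd23: "2*(b-c)*I23r \<nu> a b c = I2r \<nu> a b c - I3r \<nu> a b c"
proof -
  let ?T = "\<lambda>\<theta>. sin \<theta> * cos \<theta> * wp \<nu> a (et b c \<theta>)"
  let ?E = "\<lambda>\<theta>. 2*(b-c) * (sin \<theta> ^ 2 * (cos \<theta> ^ 2 * wpp \<nu> a (et b c \<theta>))) - sin \<theta> ^ 2 * wp \<nu> a (et b c \<theta>) + cos \<theta> ^ 2 * wp \<nu> a (et b c \<theta>)"
  have "(?E has_integral 0) {0..pi/2}"
  proof (rule ftc0)
    fix \<theta>
    have d1: "((\<lambda>\<theta>. wp \<nu> a (et b c \<theta>)) has_real_derivative wpp \<nu> a (et b c \<theta>) * (2 * (b - c) * sin \<theta> * cos \<theta>)) (at \<theta>)"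
      by (rule DERIV_chain2[OF d_wp_x d_et_theta]) (use posR in auto)
    show "(?T has_real_derivative ?E \<theta>) (at \<theta>)"
      apply (rule DERIV_cong[OF DERIV_mult[OF DERIV_mult[OF DERIV_sin DERIV_cos] d1]])
      apply (simp add: algebra_simps power2_eq_square)
      done
  qed auto
  moreover have "(?E has_integral 2*(b-c)*I23r \<nu> a b c - I2r \<nu> a b c + I3r \<nu> a b c) {0..pi/2}"
    unfolding I23r_def I2r_def I3r_def
    apply (rule has_integral_add[OF has_integral_diff[OF has_integral_mult_right[OF hint] hint] hint])
    using contR by (auto intro!: continuous_on_mult continuous_on_power continuous_on_sin continuous_on_cos continuous_on_id)
  ultimately have "0 = 2*(b-c)*I23r \<nu> a b c - I2r \<nu> a b c + I3r \<nu> a b c" by (rule has_integral_unique)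
  then show ?thesis by linarith
qed


lemma epd12: "2*(a-b)*I12r \<nu> a b c = I1r \<nu> a b c - I2r \<nu> a b c"
proof -
  let ?T = "\<lambda>\<theta>. - (sin \<theta> * cos \<theta> * w1 \<nu> a (et b c \<theta>))"
  let ?E = "\<lambda>\<theta>. 2*(a-b) * (sin \<theta> ^ 2 * w1p \<nu> a (et b c \<theta>)) - w1 \<nu> a (et b c \<theta>) + sin \<theta> ^ 2 * wp \<nu> a (et b c \<theta>)"
  have "(?E has_integral 0) {0..pi/2}"
  proof (rule ftc0)
    fix \<theta>
    have k: "2*(a - et b c \<theta>)*w1p \<nu> a (et b c \<theta>) - 2*w1 \<nu> a (et b c \<theta>) + wp \<nu> a (et b c \<theta>) = 0"
      using key_w posR by blast
    have kw: "wp \<nu> a (et b c \<theta>) = 2*w1 \<nu> a (et b c \<theta>) - 2*(a - (c + (b - c) * sin \<theta> ^ 2))*w1p \<nu> a (et b c \<theta>)"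
      using k unfolding et_alt by linarith
    have d1: "((\<lambda>\<theta>. w1 \<nu> a (et b c \<theta>)) has_real_derivative w1p \<nu> a (et b c \<theta>) * (2 * (b - c) * sin \<theta> * cos \<theta>)) (at \<theta>)"
      by (rule DERIV_chain2[OF d_w1_x d_et_theta]) (use posR in auto)
    show "(?T has_real_derivative ?E \<theta>) (at \<theta>)"
      apply (rule DERIV_cong[OF DERIV_minus[OF DERIV_mult[OF DERIV_mult[OF DERIV_sin DERIV_cos] d1]]])
      apply (insert kw sin_cos_squared_add[of \<theta>])
      apply algebra
      done
  qed auto
  moreover have "(?E has_integral 2*(a-b)*I12r \<nu> a b c - I1r \<nu> a b c + I2r \<nu> a b c) {0..pi/2}"
    unfolding I12r_def I1r_def I2r_def
    apply (rule has_integral_add[OF has_integral_diff[OF has_integral_mult_right[OF hint] hint] hint])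
    using contR by (auto intro!: continuous_on_mult continuous_on_power continuous_on_sin continuous_on_cos continuous_on_id)
  ultimately have "0 = 2*(a-b)*I12r \<nu> a b c - I1r \<nu> a b c + I2r \<nu> a b c" by (rule has_integral_unique)
  then show ?thesis by linarith
qed

lemma epd13: "2*(a-c)*I13r \<nu> a b c = I1r \<nu> a b c - I3r \<nu> a b c"
proof -
  let ?T = "\<lambda>\<theta>. sin \<theta> * cos \<theta> * w1 \<nu> a (et b c \<theta>)"
  let ?E = "\<lambda>\<theta>. 2*(a-c) * (cos \<theta> ^ 2 * w1p \<nu> a (et b c \<theta>)) - w1 \<nu> a (et b c \<theta>) + cos \<theta> ^ 2 * wp \<nu> a (et b c \<theta>)"
  have "(?E has_integral 0) {0..pi/2}"
  proof (rule ftc0)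
    fix \<theta>
    have k: "2*(a - et b c \<theta>)*w1p \<nu> a (et b c \<theta>) - 2*w1 \<nu> a (et b c \<theta>) + wp \<nu> a (et b c \<theta>) = 0"
      using key_w posR by blast
    have kw: "wp \<nu> a (et b c \<theta>) = 2*w1 \<nu> a (et b c \<theta>) - 2*(a - (c + (b - c) * sin \<theta> ^ 2))*w1p \<nu> a (et b c \<theta>)"
      using k unfolding et_alt by linarith
    have d1: "((\<lambda>\<theta>. w1 \<nu> a (et b c \<theta>)) has_real_derivative w1p \<nu> a (et b c \<theta>) * (2 * (b - c) * sin \<theta> * cos \<theta>)) (at \<theta>)"
      by (rule DERIV_chain2[OF d_w1_x d_et_theta]) (use posR in auto)
    show "(?T has_real_derivative ?E \<theta>) (at \<theta>)"
      apply (rule DERIV_cong[OF DERIV_mult[OF DERIV_mult[OF DERIV_sin DERIV_cos] d1]])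
      apply (insert kw sin_cos_squared_add[of \<theta>])
      apply algebra
      done
  qed auto
  moreover have "(?E has_integral 2*(a-c)*I13r \<nu> a b c - I1r \<nu> a b c + I3r \<nu> a b c) {0..pi/2}"
    unfolding I13r_def I1r_def I3r_def
    apply (rule has_integral_add[OF has_integral_diff[OF has_integral_mult_right[OF hint] hint] hint])
    using contR by (auto intro!: continuous_on_mult continuous_on_power continuous_on_sin continuous_on_cos continuous_on_id)
  ultimately have "0 = 2*(a-c)*I13r \<nu> a b c - I1r \<nu> a b c + I3r \<nu> a b c" by (rule has_integral_unique)
  then show ?thesis by linarith
qed

end

lemma posint:
  fixes f :: "real \<Rightarrow> real"
  assumes c: "continuous_on {0..pi/2} f" and nn: "\<And>x. x \<in> {0..pi/2} \<Longrightarrow> 0 \<le> f x" and p: "f (pi/4) > 0"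
  shows "integral {0..pi/2} f > 0"
proof -
  have h: "(f has_integral integral {0..pi/2} f) {0..pi/2}"
    using integrable_continuous_real[OF c] by (rule integrable_integral)
  have ge: "0 \<le> integral {0..pi/2} f" by (rule has_integral_nonneg[OF h nn])
  show ?thesis
  proof (rule ccontr)
    assume "\<not> ?thesis"
    then have "integral {0..pi/2} f = 0" using ge by linarith
    then have h0: "(f has_integral 0) (cbox 0 (pi/2))" using h by simp
    have "f (pi/4) = 0"
      apply (rule has_integral_0_cbox_imp_0[OF _ _ h0])
      using c nn apply (auto simp: box_real)
      using pi_gt_zero by linarith
    then show False using p by simp
  qed
qed

context
  fixes \<nu> a b c :: real
  assumes R: "-\<nu> < c" "c < b" "b < a"
begin

lemma pos_parts: "w0 \<nu> a (et b c \<theta>) > 0" "w1 \<nu> a (et b c \<theta>) < 0" "wp \<nu> a (et b c \<theta>) > 0"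
  using posR[OF R, of \<theta>] unfolding w0_def w1_def wp_def
  by (auto intro!: divide_pos_pos add_pos_pos)

lemma Ir_pos: "Ir \<nu> a b c > 0"
  unfolding Ir_def
  by (rule posint) (use contR[OF R] pos_parts in \<open>auto intro: less_imp_le\<close>)

lemma I1r_neg: "I1r \<nu> a b c < 0"
proof -
  have "integral {0..pi/2} (\<lambda>\<theta>. - w1 \<nu> a (et b c \<theta>)) > 0"
    by (rule posint) (use contR[OF R] pos_parts in \<open>auto intro!: continuous_intros intro: less_imp_le\<close>)
  then show ?thesis unfolding I1r_def by (simp add: integral_neg)
qed

lemma sin_pi4: "sin (pi/4) ^ 2 > 0" "cos (pi/4) ^ 2 > 0"
  by (simp_all add: sin_45 cos_45)

lemma I2r_pos: "I2r \<nu> a b c > 0"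
  unfolding I2r_def
  apply (rule posint)
  using contR[OF R] apply (auto intro!: continuous_on_mult continuous_on_power continuous_on_sin continuous_on_id)[1]
  subgoal for x using pos_parts(3)[of x] by (metis less_imp_le mult_nonneg_nonneg zero_le_power2)
  using pos_parts(3) sin_pi4 by (auto intro!: mult_pos_pos)

lemma I3r_pos: "I3r \<nu> a b c > 0"
  unfolding I3r_def
  apply (rule posint)
  using contR[OF R] apply (auto intro!: continuous_on_mult continuous_on_power continuous_on_cos continuous_on_id)[1]
  subgoal for x using pos_parts(3)[of x] by (metis less_imp_le mult_nonneg_nonneg zero_le_power2)
  using pos_parts(3) sin_pi4 by (auto intro!: mult_pos_pos)

end

context
  fixes \<nu> a b c :: real
  assumes R: "-\<nu> < c" "c < b" "b < a"
begin

lemma sq_le: "0 \<le> x \<Longrightarrow> x \<le> 1 \<Longrightarrow> -1 \<le> sqrt x \<and> 0 \<le> sqrt x \<and> sqrt x \<le> 1"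
proof -
  assume h: "0 \<le> x" "x \<le> 1"
  have "0 \<le> sqrt x" "sqrt x \<le> 1" using h by auto
  then show ?thesis by linarith
qed
lemma sq_lt: "0 < x \<Longrightarrow> x < 1 \<Longrightarrow> -1 < sqrt x \<and> 0 < sqrt x \<and> sqrt x < 1"
proof -
  assume h: "0 < x" "x < 1"
  have "0 < sqrt x" "sqrt x < 1" using h by auto
  then show ?thesis by linarith
qed

definition "thf \<eta> = arcsin (sqrt ((\<eta> - c) / (b - c)))"

lemma r_bounds: "\<eta> \<in> {c..b} \<Longrightarrow> 0 \<le> (\<eta> - c) / (b - c) \<and> (\<eta> - c) / (b - c) \<le> 1"
  using R by (auto simp: field_simps)

lemma thf_range: "\<eta> \<in> {c..b} \<Longrightarrow> thf \<eta> \<in> {0..pi/2}"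
proof -
  assume h: "\<eta> \<in> {c..b}"
  then have r: "-1 \<le> sqrt ((\<eta> - c) / (b - c)) \<and> 0 \<le> sqrt ((\<eta> - c) / (b - c)) \<and> sqrt ((\<eta> - c) / (b - c)) \<le> 1"
    using r_bounds sq_le by blast
  have "arcsin 0 \<le> arcsin (sqrt ((\<eta> - c) / (b - c)))" "arcsin (sqrt ((\<eta> - c) / (b - c))) \<le> arcsin 1"
    by (rule arcsin_le_arcsin; use r in linarith)+
  then show ?thesis unfolding thf_def atLeastAtMost_iff arcsin_0 arcsin_1 by linarith
qed

lemma thf_int: "\<eta> \<in> {c<..<b} \<Longrightarrow> thf \<eta> \<in> {0<..<pi/2}"
proof -
  assume h: "\<eta> \<in> {c<..<b}"
  then have "0 < (\<eta> - c) / (b - c)" "(\<eta> - c) / (b - c) < 1" using R by (auto simp: field_simps)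
  then have r: "-1 < sqrt ((\<eta> - c) / (b - c)) \<and> 0 < sqrt ((\<eta> - c) / (b - c)) \<and> sqrt ((\<eta> - c) / (b - c)) < 1"
    using sq_lt by blast
  have "arcsin 0 < arcsin (sqrt ((\<eta> - c) / (b - c)))" "arcsin (sqrt ((\<eta> - c) / (b - c))) < arcsin 1"
    by (rule arcsin_less_arcsin; use r in linarith)+
  then show ?thesis unfolding thf_def greaterThanLessThan_iff arcsin_0 arcsin_1 by linarith
qed

lemma et_thf: "\<eta> \<in> {c..b} \<Longrightarrow> et b c (thf \<eta>) = \<eta>"
proof -
  assume h: "\<eta> \<in> {c..b}"
  then have r: "0 \<le> (\<eta> - c) / (b - c)" "(\<eta> - c) / (b - c) \<le> 1" using r_bounds by auto
  then have s: "-1 \<le> sqrt ((\<eta> - c) / (b - c))" "sqrt ((\<eta> - c) / (b - c)) \<le> 1" using sq_le by blast+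
  have "sin (thf \<eta>) = sqrt ((\<eta> - c) / (b - c))" unfolding thf_def by (rule sin_arcsin[OF s])
  then have "sin (thf \<eta>) ^ 2 = (\<eta> - c) / (b - c)" using r by simp
  then show ?thesis unfolding et_alt using R by (simp add: field_simps)
qed

lemma d_thf: "\<eta> \<in> {c<..<b} \<Longrightarrow> (thf has_real_derivative 1 / (2 * sqrt ((\<eta> - c) * (b - \<eta>)))) (at \<eta>)"
proof -
  assume h: "\<eta> \<in> {c<..<b}"
  define r where "r = (\<eta> - c) / (b - c)"
  have r: "0 < r" "r < 1" using R h by (auto simp: field_simps r_def)
  have "(thf has_real_derivative inverse (sqrt (1 - (sqrt r)\<^sup>2)) * (inverse (sqrt r) / 2 * (1 / (b - c)))) (at \<eta>)"
    unfolding thf_def r_def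
    apply (rule DERIV_chain2[OF DERIV_arcsin])
    using sq_lt[OF r] apply (simp_all add: r_def)[2]
    apply (rule DERIV_chain2[OF DERIV_real_sqrt])
    using r apply (simp add: r_def)
    apply (rule DERIV_cong[OF DERIV_divide[OF DERIV_diff[OF DERIV_ident DERIV_const] DERIV_const]])
    using R by simp_all
  moreover have "inverse (sqrt (1 - (sqrt r)\<^sup>2)) * (inverse (sqrt r) / 2 * (1 / (b - c))) = 1 / (2 * sqrt ((\<eta> - c) * (b - \<eta>)))"
  proof -
    define q where "q = sqrt (b - c)"
    have e1: "1 - r = (b - \<eta>) / (b - c)" using R by (simp add: r_def field_simps)
    have s1: "sqrt (1 - r) = sqrt (b - \<eta>) / q" unfolding e1 q_def by (rule real_sqrt_divide)
    have s2: "sqrt r = sqrt (\<eta> - c) / q" unfolding r_def q_def by (rule real_sqrt_divide)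
    have s3: "(sqrt r)\<^sup>2 = r" using r by simp
    have D: "b - c = q * q" using R by (simp add: q_def)
    have pos: "q > 0" "sqrt (b - \<eta>) > 0" "sqrt (\<eta> - c) > 0" using R h by (auto simp: q_def)
    have m: "sqrt ((\<eta> - c) * (b - \<eta>)) = sqrt (\<eta> - c) * sqrt (b - \<eta>)" by (rule real_sqrt_mult)
    have alg: "inverse (x / q) * (inverse (y / q) / 2 * (1 / (q * q))) = 1 / (2 * (y * x))"
      if "q > 0" "x > 0" "y > 0" for x y q :: real using that by (simp add: field_simps)
    show ?thesis unfolding s3 unfolding s1 s2 m D by (rule alg[OF pos])
  qed
  ultimately show ?thesis by simp
qed

lemma thf_cont: "continuous_on {c..b} thf"
  unfolding thf_def
  apply (intro continuous_intros)
  using R sq_le r_bounds by auto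

lemma Iint_conv: "integral {c..b} (\<lambda>\<eta>. (\<eta> + \<nu>) / sqrt ((\<eta> + \<nu>) * (a - \<eta>) * (b - \<eta>) * (\<eta> - c))) = Ir \<nu> a b c"
proof -
  define g where "g = (\<lambda>\<theta>. w0 \<nu> a (et b c \<theta>))"
  have gc: "continuous_on {0..pi/2} g" unfolding g_def by (rule contR(1)[OF R])
  define F where "F \<eta> = integral {0..thf \<eta>} g" for \<eta>
  have Fc: "continuous_on {c..b} F"
    unfolding F_def
    apply (rule continuous_on_compose2[OF indefinite_integral_continuous_1[OF integrable_continuous_real[OF gc]] thf_cont])
    using thf_range by auto
  have Fd: "(F has_vector_derivative (\<eta> + \<nu>) / sqrt ((\<eta> + \<nu>) * (a - \<eta>) * (b - \<eta>) * (\<eta> - c))) (at \<eta>)"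
    if h: "\<eta> \<in> {c<..<b}" for \<eta>
  proof -
    have ti: "thf \<eta> \<in> interior {0..pi/2}" using thf_int[OF h] by simp
    have d1: "((\<lambda>x. integral {0..x} g) has_real_derivative g (thf \<eta>)) (at (thf \<eta>))"
      using integral_has_real_derivative[OF gc, of "thf \<eta>"] thf_int[OF h] at_within_interior[OF ti] by auto
    have d: "(F has_real_derivative g (thf \<eta>) * (1 / (2 * sqrt ((\<eta> - c) * (b - \<eta>))))) (at \<eta>)"
      unfolding F_def by (rule DERIV_chain2[OF d1 d_thf[OF h]])
    have gth: "g (thf \<eta>) = 2 * sqrt (\<eta> + \<nu>) / sqrt (a - \<eta>)"
      unfolding g_def w0_def using et_thf[of \<eta>] h by auto
    define P where "P = sqrt (\<eta> + \<nu>)"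
    define X where "X = sqrt (a - \<eta>)"
    define Y where "Y = sqrt (b - \<eta>)"
    define Z where "Z = sqrt (\<eta> - c)"
    have pos: "P > 0" "X > 0" "Y > 0" "Z > 0" using h R by (auto simp: P_def X_def Y_def Z_def)
    have m1: "sqrt ((\<eta> + \<nu>) * (a - \<eta>) * (b - \<eta>) * (\<eta> - c)) = P * X * Y * Z"
      by (simp add: real_sqrt_mult P_def X_def Y_def Z_def)
    have m2: "sqrt ((\<eta> - c) * (b - \<eta>)) = Z * Y" by (simp add: real_sqrt_mult Y_def Z_def)
    have e: "\<eta> + \<nu> = P * P" using h R by (simp add: P_def)
    have gth': "g (thf \<eta>) = 2 * P / X" unfolding gth P_def X_def ..
    have "g (thf \<eta>) * (1 / (2 * sqrt ((\<eta> - c) * (b - \<eta>)))) = (\<eta> + \<nu>) / sqrt ((\<eta> + \<nu>) * (a - \<eta>) * (b - \<eta>) * (\<eta> - c))"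
      unfolding m1 m2 gth' unfolding e using pos by (simp add: field_simps)
    with d show ?thesis by (simp add: has_real_derivative_iff_has_vector_derivative)
  qed
  have "((\<lambda>\<eta>. (\<eta> + \<nu>) / sqrt ((\<eta> + \<nu>) * (a - \<eta>) * (b - \<eta>) * (\<eta> - c))) has_integral (F b - F c)) {c..b}"
    by (rule fundamental_theorem_of_calculus_interior[OF _ Fc Fd]) (use R in auto)
  moreover have "F b = Ir \<nu> a b c" unfolding F_def thf_def Ir_def g_def using R by simp
  moreover have "F c = 0" unfolding F_def thf_def by simp
  ultimately show ?thesis by (simp add: integral_unique)
qed

end

lemma line_comp: "(u + t *\<^sub>R axis j 1) $ k = u $ k + (if k = j then t else (0::real))"
  by (simp add: axis_def)

definition "Rg \<nu> = {u :: real^3. -\<nu> < u$3 \<and> u$3 < u$2 \<and> u$2 < u$1}"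

lemma cont_nth: "continuous_on UNIV (\<lambda>u :: real^3. u $ k)"
  by (rule linear_continuous_on[OF bounded_linear_vec_nth])

lemma open_Rg: "open (Rg \<nu>)"
proof -
  have "Rg \<nu> = {u. -\<nu> < u$3} \<inter> {u. u$3 < u$2} \<inter> {u. u$2 < u$1}" by (auto simp: Rg_def)
  then show ?thesis
    by (auto intro!: open_Int open_Collect_less cont_nth continuous_on_const)
qed

lemma line_open: "open {t :: real. x + t *\<^sub>R axis j 1 \<in> Rg \<nu>}"
proof -
  have "{t :: real. x + t *\<^sub>R axis j 1 \<in> Rg \<nu>} = (\<lambda>t. x + t *\<^sub>R axis j 1) -` Rg \<nu>" by auto
  also have "open \<dots>"
    by (rule continuous_open_vimage[OF open_Rg]) (intro continuous_intros)
  finally show ?thesis .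
qed

lemma line_deriv:
  fixes H :: "real \<Rightarrow> real \<Rightarrow> real \<Rightarrow> real" and u :: "real^3"
  assumes "j = 1 \<Longrightarrow> ((\<lambda>x. H x (u$2) (u$3)) has_real_derivative D) (at (u$1))"
          "j = 2 \<Longrightarrow> ((\<lambda>x. H (u$1) x (u$3)) has_real_derivative D) (at (u$2))"
          "j = 3 \<Longrightarrow> ((\<lambda>x. H (u$1) (u$2) x) has_real_derivative D) (at (u$3))"
  shows "((\<lambda>t. H ((u + t *\<^sub>R axis j 1)$1) ((u + t *\<^sub>R axis j 1)$2) ((u + t *\<^sub>R axis j 1)$3)) has_real_derivative D) (at 0)"
proof -
  consider "j = 1" | "j = 2" | "j = 3" using exhaust_3 by blast
  then show ?thesis
  proof cases
    case 1
    have "((\<lambda>t. H (t + u$1) (u$2) (u$3)) has_real_derivative D) (at 0)"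
      using assms(1)[OF 1] DERIV_shift[of "\<lambda>x. H x (u$2) (u$3)" D 0 "u$1"] by simp
    then show ?thesis using 1 unfolding line_comp by (simp add: add.commute)
  next
    case 2
    have "((\<lambda>t. H (u$1) (t + u$2) (u$3)) has_real_derivative D) (at 0)"
      using assms(2)[OF 2] DERIV_shift[of "\<lambda>x. H (u$1) x (u$3)" D 0 "u$2"] by simp
    then show ?thesis using 2 unfolding line_comp by (simp add: add.commute)
  next
    case 3
    have "((\<lambda>t. H (u$1) (u$2) (t + u$3)) has_real_derivative D) (at 0)"
      using assms(3)[OF 3] DERIV_shift[of "\<lambda>x. H (u$1) (u$2) x" D 0 "u$3"] by simp
    then show ?thesis using 3 unfolding line_comp by (simp add: add.commute)
  qed
qed


definition "Iv \<nu> u = Ir \<nu> (u$1) (u$2) (u$3)"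
definition "Dv \<nu> i u = (if i = 1 then I1r \<nu> (u$1) (u$2) (u$3) else if i = 2 then I2r \<nu> (u$1) (u$2) (u$3) else I3r \<nu> (u$1) (u$2) (u$3))"
definition "DDv \<nu> i j u = (if (i = 1 \<and> j = 2) \<or> (i = 2 \<and> j = 1) then I12r \<nu> (u$1) (u$2) (u$3)
   else if (i = 1 \<and> j = 3) \<or> (i = 3 \<and> j = 1) then I13r \<nu> (u$1) (u$2) (u$3) else I23r \<nu> (u$1) (u$2) (u$3))"

lemma Rg_D: "u \<in> Rg \<nu> \<Longrightarrow> -\<nu> < u$3 \<and> u$3 < u$2 \<and> u$2 < u$1"
  by (simp add: Rg_def)

lemma Iv_line: assumes "u \<in> Rg \<nu>" shows "((\<lambda>t. Iv \<nu> (u + t *\<^sub>R axis j 1)) has_real_derivative Dv \<nu> j u) (at 0)"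
  using Rg_D[OF assms] unfolding Iv_def
  by (intro line_deriv) (auto simp: Dv_def intro: dIr_a dIr_b dIr_c)

lemma Dv_line: assumes "u \<in> Rg \<nu>" "i \<noteq> j"
  shows "((\<lambda>t. Dv \<nu> i (u + t *\<^sub>R axis j 1)) has_real_derivative DDv \<nu> i j u) (at 0)"
proof -
  have R: "-\<nu> < u$3" "u$3 < u$2" "u$2 < u$1" using Rg_D[OF assms(1)] by auto
  consider "i = 1" | "i = 2" | "i = 3" using exhaust_3 by blast
  then show ?thesis
  proof cases
    case 1
    then have dv: "Dv \<nu> i = (\<lambda>x. I1r \<nu> (x$1) (x$2) (x$3))" by (auto simp: Dv_def fun_eq_iff)
    show ?thesis unfolding dv using assms(2) R 1
      by (intro line_deriv) (auto simp: DDv_def intro: dI1r_b dI1r_c)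
  next
    case 2
    then have dv: "Dv \<nu> i = (\<lambda>x. I2r \<nu> (x$1) (x$2) (x$3))" by (auto simp: Dv_def fun_eq_iff)
    show ?thesis unfolding dv using assms(2) R 2
      by (intro line_deriv) (auto simp: DDv_def intro: dI2r_a dI2r_c)
  next
    case 3
    then have dv: "Dv \<nu> i = (\<lambda>x. I3r \<nu> (x$1) (x$2) (x$3))" by (auto simp: Dv_def fun_eq_iff)
    show ?thesis unfolding dv using assms(2) R 3
      by (intro line_deriv) (auto simp: DDv_def intro: dI3r_a dI3r_b)
  qed
qed

lemma Iint_Rg: "u \<in> Rg \<nu> \<Longrightarrow> Iint \<nu> u = Iv \<nu> u"
  unfolding Iint_def Iv_def using Iint_conv Rg_D by blast

lemma pdI: assumes "u \<in> Rg \<nu>" shows "pd i (Iint \<nu>) u = Dv \<nu> i u"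
proof -
  have "((\<lambda>t. Iint \<nu> (u + t *\<^sub>R axis i 1)) has_real_derivative Dv \<nu> i u) (at 0)"
    apply (rule has_field_derivative_transform_within_open[OF Iv_line[OF assms] line_open[of u i \<nu>]])
    using assms by (auto simp: Iint_Rg)
  then show ?thesis unfolding pd_def by (rule DERIV_imp_deriv)
qed

lemma epd_v: assumes "u \<in> Rg \<nu>" "i \<noteq> j"
  shows "2 * (u$i - u$j) * DDv \<nu> i j u = Dv \<nu> i u - Dv \<nu> j u"
proof -
  have R: "-\<nu> < u$3" "u$3 < u$2" "u$2 < u$1" using Rg_D[OF assms(1)] by auto
  note e = epd12[OF R] epd13[OF R] epd23[OF R]
  have sw: "2 * (y - x) * (Z::real) = - (2 * (x - y) * Z)" for x y Z by (simp add: algebra_simps)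
  consider "i = 1" "j = 2" | "i = 1" "j = 3" | "i = 2" "j = 1" | "i = 2" "j = 3" | "i = 3" "j = 1" | "i = 3" "j = 2"
    using exhaust_3[of i] exhaust_3[of j] assms(2) by blast
  then show ?thesis
    by cases (use e in \<open>simp_all add: Dv_def DDv_def algebra_simps\<close>)
qed

lemma nz_v: assumes "u \<in> Rg \<nu>" shows "Iv \<nu> u \<noteq> 0" "Dv \<nu> i u \<noteq> 0"
proof -
  have R: "-\<nu> < u$3" "u$3 < u$2" "u$2 < u$1" using Rg_D[OF assms(1)] by auto
  show "Iv \<nu> u \<noteq> 0" unfolding Iv_def using Ir_pos[OF R] by simp
  show "Dv \<nu> i u \<noteq> 0" unfolding Dv_def using I1r_neg[OF R] I2r_pos[OF R] I3r_pos[OF R] by auto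
qed


lemma final_alg:
  fixes I Di Dj Dij qi qj qij d q :: real
  assumes "d \<noteq> 0" "I \<noteq> 0" "Di \<noteq> 0" "Dj \<noteq> 0" "2 * d * qij = qi - qj" "2 * d * Dij = Di - Dj"
  shows "- ((Dj * Di - I * Dij) / (Di * Di)) * qi + qij * (- (I / Di)) + qj =
    (1/2) * ((- (I / Di)) - 2 * d) / ((- (I / Dj)) * d) * (((- (I / Di)) * qi + q) - ((- (I / Dj)) * qj + q))"
proof -
  have a: "qij = (qi - qj) / (2 * d)" "Dij = (Di - Dj) / (2 * d)" using assms by (auto simp: field_simps)
  show ?thesis unfolding a using assms(1-4) by (simp add: field_simps)
qed

lemma smooth_line:
  assumes "smooth3_on S g" "x \<in> S"
  shows "((\<lambda>t. g (x + t *\<^sub>R axis j 1)) has_real_derivative pd j g x) (at 0)"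
    "((\<lambda>t. pd i g (x + t *\<^sub>R axis j 1)) has_real_derivative pd j (pd i g) x) (at 0)"
proof -
  have A: "\<And>is i x. x\<in>S \<Longrightarrow> ((\<lambda>t. iter_pd is g (x + t *\<^sub>R axis i 1)) has_real_derivative iter_pd (i # is) g x) (at 0)"
    using assms(1) unfolding smooth3_on_def by blast
  from A[of x "[]" j] A[of x "[i]" j] assms(2)
  show "((\<lambda>t. g (x + t *\<^sub>R axis j 1)) has_real_derivative pd j g x) (at 0)"
    "((\<lambda>t. pd i g (x + t *\<^sub>R axis j 1)) has_real_derivative pd j (pd i g) x) (at 0)"
    by (simp_all add: iter_pd_def)
qed

lemma wfun_Rg: assumes "x \<in> Rg \<nu>"
  shows "wfun \<nu> q i x = - (Iv \<nu> x / Dv \<nu> i x) * pd i q x + q x"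
proof -
  have "x$3 < x$2 \<and> x$2 < x$1" using Rg_D[OF assms] by auto
  then have "lam_ext \<nu> i x = lam \<nu> i x" by (simp add: lam_ext_def)
  then show ?thesis unfolding wfun_def lam_def using Iint_Rg[OF assms] pdI[OF assms] by simp
qed

lemma Bcoef_Rg: assumes "x \<in> Rg \<nu>"
  shows "Bcoef \<nu> i j x = (1/2) * ((- (Iv \<nu> x / Dv \<nu> i x)) - 2 * (x$i - x$j)) / ((- (Iv \<nu> x / Dv \<nu> j x)) * (x$i - x$j))"
  unfolding Bcoef_def lam_def using Iint_Rg[OF assms] pdI[OF assms] by simp

lemma main_deriv:
  fixes q :: "real^3 \<Rightarrow> real" and J :: "real set"
  assumes Jn: "J \<subseteq> {-\<nu><..}"
    and q_smooth: "smooth3_on (cube J) q"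
    and pde: "\<And>u i j. u \<in> cube J \<Longrightarrow>
       2 * (u$i - u$j) * pd j (pd i q) u = pd i q u - pd j q u"
    and u: "u \<in> cube J" "u$3 < u$2" "u$2 < u$1" and ij: "i \<noteq> j"
  shows "((\<lambda>t. wfun \<nu> q i (u + t *\<^sub>R axis j 1)) has_real_derivative
               Bcoef \<nu> i j u * (wfun \<nu> q i u - wfun \<nu> q j u)) (at 0)"
proof -
  have "u$3 \<in> J" using u(1) by (simp add: cube_def)
  then have uR: "u \<in> Rg \<nu>" using Jn u by (auto simp: Rg_def)
  have dij: "u$i - u$j \<noteq> 0"
  proof -
    have "u$i \<noteq> u$j" using ij u exhaust_3[of i] exhaust_3[of j] by auto
    then show ?thesis by simp
  qed
  let ?L = "\<lambda>t. u + t *\<^sub>R axis j 1"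
  let ?\<phi> = "\<lambda>t. - (Iv \<nu> (?L t) / Dv \<nu> i (?L t)) * pd i q (?L t) + q (?L t)"
  have d\<phi>: "(?\<phi> has_real_derivative
      - ((Dv \<nu> j u * Dv \<nu> i u - Iv \<nu> u * DDv \<nu> i j u) / (Dv \<nu> i u * Dv \<nu> i u)) * pd i q u
      + pd j (pd i q) u * (- (Iv \<nu> u / Dv \<nu> i u)) + pd j q u) (at 0)"
    using nz_v[OF uR] DERIV_add[OF DERIV_mult[OF DERIV_minus[OF DERIV_divide[OF Iv_line[OF uR, where j=j] Dv_line[OF uR ij]]]
          smooth_line(2)[OF q_smooth u(1), where i=i and j=j]] smooth_line(1)[OF q_smooth u(1), where j=j]]
    by (simp; blast)
  have val: "- ((Dv \<nu> j u * Dv \<nu> i u - Iv \<nu> u * DDv \<nu> i j u) / (Dv \<nu> i u * Dv \<nu> i u)) * pd i q u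
      + pd j (pd i q) u * (- (Iv \<nu> u / Dv \<nu> i u)) + pd j q u = Bcoef \<nu> i j u * (wfun \<nu> q i u - wfun \<nu> q j u)"
    unfolding Bcoef_Rg[OF uR] wfun_Rg[OF uR]
    by (rule final_alg[OF dij nz_v(1)[OF uR] nz_v(2)[OF uR] nz_v(2)[OF uR] pde[OF u(1)] epd_v[OF uR ij]])
  show ?thesis
    apply (rule has_field_derivative_transform_within_open[OF d\<phi>[unfolded val] line_open[of u j \<nu>]])
    using uR by (auto simp: wfun_Rg)
qed


lemma diag_deriv:
  fixes g :: "real^3 \<Rightarrow> real"
  assumes sm: "smooth3_on S g" and S: "open S" and p: "p \<in> S"
  shows "((\<lambda>t. g (p + t *\<^sub>R axis k 1 + t *\<^sub>R axis l 1)) has_real_derivative pd k g p + pd l g p) (at 0)"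
proof -
  obtain e where e: "e > 0" "ball p e \<subseteq> S" using S p open_contains_ball by blast
  define \<delta> where "\<delta> = e / 2"
  have \<delta>: "\<delta> > 0" using e by (simp add: \<delta>_def)
  define X where "X = ball (0::real) \<delta>"
  define f where "f x y = g (p + x *\<^sub>R axis k 1 + y *\<^sub>R axis l 1)" for x y
  have pt: "p + x *\<^sub>R axis k 1 + y *\<^sub>R axis l 1 \<in> S" if "x \<in> X" "y \<in> X" for x y
  proof -
    have "norm (x *\<^sub>R axis k (1::real) + y *\<^sub>R axis l 1) \<le> norm (x *\<^sub>R axis k (1::real)) + norm (y *\<^sub>R axis l (1::real))"
      by (rule norm_triangle_ineq)
    also have "\<dots> = \<bar>x\<bar> + \<bar>y\<bar>" by simp
    also have "\<dots> < e" using that by (simp add: X_def \<delta>_def)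
    finally have "dist (p + x *\<^sub>R axis k 1 + y *\<^sub>R axis l 1) p < e"
      by (simp add: dist_norm add.assoc)
    then have "p + x *\<^sub>R axis k 1 + y *\<^sub>R axis l 1 \<in> ball p e" by (simp add: dist_commute)
    then show ?thesis using e by auto
  qed
  have A: "((\<lambda>t. g (z + t *\<^sub>R axis i 1)) has_real_derivative pd i g z) (at 0)" if "z \<in> S" for z i
    by (rule smooth_line(1)[OF sm that])
  have cpd: "continuous_on S (pd l g)"
    using sm unfolding smooth3_on_def iter_pd_def by (metis foldr.simps(1) foldr.simps(2) id_apply o_apply)
  have fx: "((\<lambda>x. f x 0) has_derivative (\<lambda>h. pd k g p * h)) (at 0 within X)"
    using A[OF p, of k] unfolding f_def has_field_derivative_def
    by (auto intro: has_derivative_at_withinI)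
  have fy: "((\<lambda>y. f x y) has_derivative blinfun_apply (blinfun_mult_right (pd l g (p + x *\<^sub>R axis k 1 + y *\<^sub>R axis l 1)))) (at y within X)"
    if "x \<in> X" "y \<in> X" for x y
  proof -
    let ?z = "p + x *\<^sub>R axis k 1 + y *\<^sub>R axis l 1"
    have "((\<lambda>t. g (?z + t *\<^sub>R axis l 1)) has_real_derivative pd l g ?z) (at 0)" by (rule A[OF pt[OF that]])
    moreover have "(\<lambda>t. g (?z + t *\<^sub>R axis l 1)) = (\<lambda>t. f x (t + y))"
      by (auto simp: f_def algebra_simps)
    ultimately have "((\<lambda>t. f x (t + y)) has_real_derivative pd l g ?z) (at 0)" by simp
    then have "((\<lambda>y. f x y) has_real_derivative pd l g ?z) (at (0 + y))" using DERIV_shift by blast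
    then show ?thesis unfolding has_field_derivative_def by (auto intro: has_derivative_at_withinI)
  qed
  have fyc: "continuous (at (0, 0) within X \<times> X) (\<lambda>(x, y). blinfun_mult_right (pd l g (p + x *\<^sub>R axis k 1 + y *\<^sub>R axis l 1)))"
  proof -
    have "continuous_on (X \<times> X) (\<lambda>w. pd l g (p + fst w *\<^sub>R axis k 1 + snd w *\<^sub>R axis l 1))"
      apply (rule continuous_on_compose2[OF cpd])
       apply (intro continuous_intros)
      using pt by auto
    then have "continuous_on (X \<times> X) (\<lambda>w. blinfun_mult_right (pd l g (p + fst w *\<^sub>R axis k 1 + snd w *\<^sub>R axis l 1)))"
      by (intro continuous_intros)
    moreover have "(0, 0) \<in> X \<times> X" using \<delta> by (simp add: X_def)
    ultimately show ?thesis
      by (simp add: continuous_on_eq_continuous_within split_beta')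
  qed
  have "((\<lambda>(x, y). f x y) has_derivative (\<lambda>(tx, ty). pd k g p * tx + blinfun_apply (blinfun_mult_right (pd l g (p + 0 *\<^sub>R axis k 1 + 0 *\<^sub>R axis l 1))) ty)) (at (0, 0) within X \<times> X)"
    by (rule has_derivative_partialsI[OF fx fy fyc]) (use \<delta> in \<open>auto simp: X_def\<close>)
  moreover have "open (X \<times> X)" by (simp add: X_def open_Times)
  moreover have "(0, 0) \<in> X \<times> X" using \<delta> by (simp add: X_def)
  ultimately have D2: "((\<lambda>(x, y). f x y) has_derivative (\<lambda>(tx, ty). pd k g p * tx + pd l g p * ty)) (at (0, 0))"
    by (simp add: at_within_open[of "(0,0)" "X \<times> X"])
  have Dd: "((\<lambda>t::real. (t, t)) has_derivative (\<lambda>h. (h, h))) (at 0)"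
    by (intro derivative_eq_intros) auto
  have "((\<lambda>t. (\<lambda>(x, y). f x y) (t, t)) has_derivative (\<lambda>h. (\<lambda>(tx, ty). pd k g p * tx + pd l g p * ty) (h, h))) (at 0)"
    using has_derivative_compose[OF Dd D2] by simp
  then have "((\<lambda>t. f t t) has_derivative (\<lambda>h. (pd k g p + pd l g p) * h)) (at 0)"
    by (simp add: algebra_simps)
  then show ?thesis unfolding has_field_derivative_def f_def by simp
qed


lemma smooth_pd: "smooth3_on S g \<Longrightarrow> smooth3_on S (pd i g)"
proof -
  assume sm: "smooth3_on S g"
  have e: "iter_pd is (pd i g) = iter_pd (is @ [i]) g" for "is" by (simp add: iter_pd_def)
  have A1: "continuous_on S (iter_pd js g)" for js using sm unfolding smooth3_on_def by blast
  have A2: "((\<lambda>t. iter_pd js g (x + t *\<^sub>R axis j 1)) has_real_derivative iter_pd (j # js) g x) (at 0)"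
    if "x \<in> S" for js j x using sm that unfolding smooth3_on_def by blast
  show ?thesis unfolding smooth3_on_def e
  proof (intro allI conjI ballI)
    fix "is" j x assume "x \<in> S"
    show "((\<lambda>t. iter_pd (is @ [i]) g (x + t *\<^sub>R axis j 1)) has_real_derivative iter_pd ((j # is) @ [i]) g x) (at 0)"
      using A2[OF \<open>x \<in> S\<close>, of "is @ [i]" j] by simp
  qed (rule A1)
qed

lemma all3: "(\<forall>i::3. P i) \<longleftrightarrow> P 1 \<and> P 2 \<and> P 3"
  by (metis exhaust_3)

lemma cube_open: "open J \<Longrightarrow> open (cube J)"
proof -
  assume J: "open J"
  have c: "continuous (at x) (\<lambda>u :: real^3. u $ k)" for x k
    by (rule linear_continuous_at[OF bounded_linear_vec_nth])
  have o: "open ((\<lambda>u :: real^3. u $ k) -` J)" for k by (rule continuous_open_vimage[OF J c])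
  have "cube J = (\<lambda>u. u$1) -` J \<inter> (\<lambda>u. u$2) -` J \<inter> (\<lambda>u. u$3) -` J"
    unfolding cube_def all3 by auto
  then show ?thesis by (simp only: open_Int o)
qed

lemma vec_cube: "vector [a, b, c] \<in> cube J \<longleftrightarrow> a \<in> J \<and> b \<in> J \<and> c \<in> J"
  unfolding cube_def mem_Collect_eq all3 by simp

lemma shift12: "vector [t + s, t + s, y] = (vector [s, s, y] :: real^3) + t *\<^sub>R axis 1 1 + t *\<^sub>R axis 2 1"
  unfolding vec_eq_iff all3 by (simp add: axis_def)

lemma shift23: "vector [x, t + s, t + s] = (vector [x, s, s] :: real^3) + t *\<^sub>R axis 2 1 + t *\<^sub>R axis 3 1"
  unfolding vec_eq_iff all3 by (simp add: axis_def)

lemma d12: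
  assumes sm: "smooth3_on S g" "open S" "vector [s, s, y] \<in> S"
  shows "((\<lambda>s. g (vector [s, s, y])) has_real_derivative pd 1 g (vector [s, s, y]) + pd 2 g (vector [s, s, y])) (at s)"
proof -
  have "((\<lambda>t. g (vector [t + s, t + s, y])) has_real_derivative pd 1 g (vector [s, s, y]) + pd 2 g (vector [s, s, y])) (at 0)"
    unfolding shift12 by (rule diag_deriv[OF sm])
  then show ?thesis using DERIV_shift[of "\<lambda>s. g (vector [s, s, y])" _ 0 s] by simp
qed

lemma d23:
  assumes sm: "smooth3_on S g" "open S" "vector [x, s, s] \<in> S"
  shows "((\<lambda>s. g (vector [x, s, s])) has_real_derivative pd 2 g (vector [x, s, s]) + pd 3 g (vector [x, s, s])) (at s)"
proof -
  have "((\<lambda>t. g (vector [x, t + s, t + s])) has_real_derivative pd 2 g (vector [x, s, s]) + pd 3 g (vector [x, s, s])) (at 0)"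
    unfolding shift23 by (rule diag_deriv[OF sm])
  then show ?thesis using DERIV_shift[of "\<lambda>s. g (vector [x, s, s])" _ 0 s] by simp
qed

context
  fixes \<nu> :: real and J :: "real set" and f :: "real \<Rightarrow> real" and q :: "real^3 \<Rightarrow> real"
  assumes J: "open J" "is_interval J"
    and q_smooth: "smooth3_on (cube J) q"
    and pde: "\<And>u i j. u \<in> cube J \<Longrightarrow>
       2 * (u$i - u$j) * pd j (pd i q) u = pd i q u - pd j q u"
    and diag: "\<And>x. x \<in> J \<Longrightarrow> q (vector [x, x, x]) = f x"
begin

lemma seg: "x \<in> J \<Longrightarrow> y \<in> J \<Longrightarrow> s \<in> {y..x} \<Longrightarrow> s \<in> J"
proof -
  assume h: "x \<in> J" "y \<in> J" "s \<in> {y..x}"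
  have "\<forall>a\<in>J. \<forall>b\<in>J. \<forall>x. a \<le> x \<and> x \<le> b \<longrightarrow> x \<in> J" using J(2)[unfolded is_interval_1] .
  from this[rule_format, OF h(2) h(1), of s] h(3) show "s \<in> J" by simp
qed

lemma face1_3: assumes "x \<in> J" "y \<in> J" "y < x"
  shows "wfun \<nu> q 3 (vector [x, x, y]) = f y"
proof -
  define h where "h s = 2 * (y - s) * pd 3 q (vector [s, s, y]) + q (vector [s, s, y])" for s
  have co: "open (cube J)" using cube_open[OF J(1)] .
  have dh: "(h has_real_derivative 0) (at s)" if s: "s \<in> J" for s
  proof -
    let ?v = "vector [s, s, y] :: real^3"
    have v: "?v \<in> cube J" using s assms by (simp add: vec_cube)
    have dl: "((\<lambda>s. 2 * (y - s)) has_real_derivative -2) (at s)"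
      by (rule derivative_eq_intros refl | simp)+
    have dd: "(h has_real_derivative (-2 * pd 3 q ?v + (pd 1 (pd 3 q) ?v + pd 2 (pd 3 q) ?v) * (2 * (y - s)))
        + (pd 1 q ?v + pd 2 q ?v)) (at s)"
      unfolding h_def by (rule DERIV_add[OF DERIV_mult[OF dl d12[OF smooth_pd[OF q_smooth] co v]] d12[OF q_smooth co v]])
    have e1: "2 * (y - s) * pd 1 (pd 3 q) ?v = pd 3 q ?v - pd 1 q ?v"
      using pde[OF v, of 3 1] by simp
    have e2: "2 * (y - s) * pd 2 (pd 3 q) ?v = pd 3 q ?v - pd 2 q ?v"
      using pde[OF v, of 3 2] by simp
    have r: "(pd 1 (pd 3 q) ?v + pd 2 (pd 3 q) ?v) * (2 * (y - s)) = 2 * (y - s) * pd 1 (pd 3 q) ?v + 2 * (y - s) * pd 2 (pd 3 q) ?v"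
      by (simp add: algebra_simps)
    have "(-2 * pd 3 q ?v + (pd 1 (pd 3 q) ?v + pd 2 (pd 3 q) ?v) * (2 * (y - s))) + (pd 1 q ?v + pd 2 q ?v) = 0"
      unfolding r e1 e2 by simp
    with dd show ?thesis by simp
  qed
  have "h x = h y"
  proof (rule DERIV_isconst_end[OF assms(3)])
    have "isCont h s" if "s \<in> {y..x}" for s using DERIV_isCont[OF dh[OF seg[OF assms(1,2) that]]] .
    then show "continuous_on {y..x} h" by (simp add: continuous_at_imp_continuous_on)
    show "\<And>s. y < s \<Longrightarrow> s < x \<Longrightarrow> DERIV h s :> 0" using dh seg[OF assms(1,2)] by simp
  qed
  moreover have "h y = f y" unfolding h_def using diag assms by simp
  moreover have "h x = wfun \<nu> q 3 (vector [x, x, y])"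
    unfolding h_def wfun_def lam_ext_def gam_def using assms by (simp add: algebra_simps)
  ultimately show ?thesis by simp
qed

lemma face2_1: assumes "x \<in> J" "y \<in> J" "y < x"
  shows "wfun \<nu> q 1 (vector [x, y, y]) = f x"
proof -
  define h where "h s = 2 * (x - s) * pd 1 q (vector [x, s, s]) + q (vector [x, s, s])" for s
  have co: "open (cube J)" using cube_open[OF J(1)] .
  have dh: "(h has_real_derivative 0) (at s)" if s: "s \<in> J" for s
  proof -
    let ?v = "vector [x, s, s] :: real^3"
    have v: "?v \<in> cube J" using s assms by (simp add: vec_cube)
    have dl: "((\<lambda>s. 2 * (x - s)) has_real_derivative -2) (at s)"
      by (rule derivative_eq_intros refl | simp)+
    have dd: "(h has_real_derivative (-2 * pd 1 q ?v + (pd 2 (pd 1 q) ?v + pd 3 (pd 1 q) ?v) * (2 * (x - s)))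
        + (pd 2 q ?v + pd 3 q ?v)) (at s)"
      unfolding h_def by (rule DERIV_add[OF DERIV_mult[OF dl d23[OF smooth_pd[OF q_smooth] co v]] d23[OF q_smooth co v]])
    have e1: "2 * (x - s) * pd 2 (pd 1 q) ?v = pd 1 q ?v - pd 2 q ?v"
      using pde[OF v, of 1 2] by simp
    have e2: "2 * (x - s) * pd 3 (pd 1 q) ?v = pd 1 q ?v - pd 3 q ?v"
      using pde[OF v, of 1 3] by simp
    have r: "(pd 2 (pd 1 q) ?v + pd 3 (pd 1 q) ?v) * (2 * (x - s)) = 2 * (x - s) * pd 2 (pd 1 q) ?v + 2 * (x - s) * pd 3 (pd 1 q) ?v"
      by (simp add: algebra_simps)
    have "(-2 * pd 1 q ?v + (pd 2 (pd 1 q) ?v + pd 3 (pd 1 q) ?v) * (2 * (x - s))) + (pd 2 q ?v + pd 3 q ?v) = 0"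
      unfolding r e1 e2 by simp
    with dd show ?thesis by simp
  qed
  have "h x = h y"
  proof (rule DERIV_isconst_end[OF assms(3)])
    have "isCont h s" if "s \<in> {y..x}" for s using DERIV_isCont[OF dh[OF seg[OF assms(1,2) that]]] .
    then show "continuous_on {y..x} h" by (simp add: continuous_at_imp_continuous_on)
    show "\<And>s. y < s \<Longrightarrow> s < x \<Longrightarrow> DERIV h s :> 0" using dh seg[OF assms(1,2)] by simp
  qed
  moreover have "h x = f x" unfolding h_def using diag assms by simp
  moreover have "h y = wfun \<nu> q 1 (vector [x, y, y])"
    unfolding h_def wfun_def lam_ext_def gam_def using assms by (simp add: algebra_simps)
  ultimately show ?thesis by simp
qed

lemma face1_12: assumes "x \<in> J" "y \<in> J" "y < x"
  shows "wfun \<nu> q 1 (vector [x, x, y]) = wfun \<nu> q 2 (vector [x, x, y])"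
  unfolding wfun_def lam_ext_def gam_def using assms by simp

lemma face2_23: assumes "x \<in> J" "y \<in> J" "y < x"
  shows "wfun \<nu> q 2 (vector [x, y, y]) = wfun \<nu> q 3 (vector [x, y, y])"
proof -
  have v: "vector [x, y, y] \<in> cube J" using assms by (simp add: vec_cube)
  have "pd 2 q (vector [x, y, y]) = pd 3 q (vector [x, y, y])" using pde[OF v, of 2 3] by simp
  then show ?thesis unfolding wfun_def lam_ext_def gam_def using assms by simp
qed

end

theorem theorem5p1:
  fixes \<nu> :: real and J :: "real set" and f :: "real \<Rightarrow> real" and q :: "real^3 \<Rightarrow> real"
  assumes J: "open J" "is_interval J" "J \<noteq> {}" "J \<subseteq> {-\<nu><..}"
    and f_smooth: "smooth_on_real J f"
    and q_smooth: "smooth3_on (cube J) q"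
    and pde: "\<And>u i j. u \<in> cube J \<Longrightarrow>
       2 * (u$i - u$j) * pd j (pd i q) u = pd i q u - pd j q u"
    and diag: "\<And>x. x \<in> J \<Longrightarrow> q (vector [x, x, x]) = f x"
  shows "(\<forall>u i j. u \<in> cube J \<and> u$3 < u$2 \<and> u$2 < u$1 \<and> i \<noteq> j \<longrightarrow>
            ((\<lambda>t. wfun \<nu> q i (u + t *\<^sub>R axis j 1)) has_real_derivative
               Bcoef \<nu> i j u * (wfun \<nu> q i u - wfun \<nu> q j u)) (at 0))
       \<and> (\<forall>u1 u3. u1 \<in> J \<and> u3 \<in> J \<and> u3 < u1 \<longrightarrow>
            wfun \<nu> q 1 (vector [u1, u1, u3]) = wfun \<nu> q 2 (vector [u1, u1, u3])
          \<and> wfun \<nu> q 3 (vector [u1, u1, u3]) = f u3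
          \<and> wfun \<nu> q 1 (vector [u1, u3, u3]) = f u1
          \<and> wfun \<nu> q 2 (vector [u1, u3, u3]) = wfun \<nu> q 3 (vector [u1, u3, u3]))"
proof (intro conjI allI impI)
  fix u :: "real^3" and i j :: 3
  assume h: "u \<in> cube J \<and> u$3 < u$2 \<and> u$2 < u$1 \<and> i \<noteq> j"
  show "((\<lambda>t. wfun \<nu> q i (u + t *\<^sub>R axis j 1)) has_real_derivative
               Bcoef \<nu> i j u * (wfun \<nu> q i u - wfun \<nu> q j u)) (at 0)"
    using h by (intro main_deriv[OF J(4) q_smooth pde]) auto
next
  fix u1 u3 assume h: "u1 \<in> J \<and> u3 \<in> J \<and> u3 < u1"
  then have h1: "u1 \<in> J" and h3: "u3 \<in> J" and lt: "u3 < u1" by auto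
  note facts = J(1,2) q_smooth pde diag
  show "wfun \<nu> q 1 (vector [u1, u1, u3]) = wfun \<nu> q 2 (vector [u1, u1, u3])"
    by (rule face1_12[OF facts h1 h3 lt])
  show "wfun \<nu> q 3 (vector [u1, u1, u3]) = f u3"
    by (rule face1_3[OF facts h1 h3 lt])
  show "wfun \<nu> q 1 (vector [u1, u3, u3]) = f u1"
    by (rule face2_1[OF facts h1 h3 lt])
  show "wfun \<nu> q 2 (vector [u1, u3, u3]) = wfun \<nu> q 3 (vector [u1, u3, u3])"
    by (rule face2_23[OF facts h1 h3 lt])
qed


end
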